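(* Consider the controlled SEIR system described in the context. The set $$\mathbb{X}_f:=\Big\{(S,E,I)\in\Pi:\ S\le \tfrac{\gamma_{\mathrm{nom}}}{\beta_{\mathrm{nom}}},\ I\le I_{\max},\ E\le \tfrac{\gamma_{\mathrm{nom}}}{\eta}I_{\max}\Big\}\cup\mathcal{E}$$ is contained in $\mathcal{M}$. Moreover, for every $x_0\in\mathbb{X}_f$ and every $u\in\mathcal{U}$, the compartments $E$ and $I$ of $x(\cdot;x_0,u)$ decay exponentially, i.e., there exist constants $c\ge0$ and $\lambda>0$ with $E(t)+I(t)\le c\,e^{-\lambda t}$ for all $t\ge 0$.
   Context: Fix parameters $\eta>0$, $0<\beta_{\min}\le\beta_{\mathrm{nom}}$, $0<\gamma_{\mathrm{nom}}\le\gamma_{\max}<\infty$ and $I_{\max}\in(0,1)$. Let $U:=[\beta_{\min},\beta_{\mathrm{nom}}]\times[\gamma_{\mathrm{nom}},\gamma_{\max}]$ and let $\mathcal{U}$ be the set of measurable, locally integrable functions $u=(\beta,\gamma):[0,\infty)\to U$. Let $\Pi:=\{(S,E,I)\in[0,1]^3: S+E+I\le 1\}$. For $x_0\in\Pi$ and $u\in\mathcal{U}$, $x(\cdot;x_0,u)=(S,E,I)$ denotes the unique solution of $\dot S=-\beta(t)SI$, $\dot E=\beta(t)SI-\eta E$, $\dot I=\eta E-\gamma(t)I$ with $x(0)=x_0$; it stays in $\Pi$. Let $G_\Pi:=\{(S,E,I)\in\Pi: I\le I_{\max}\}$ and $\mathcal{M}:=\{x_0\in G_\Pi: x(t;x_0,u)\in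 G_\Pi\ \forall t\ge0,\ \forall u\in\mathcal{U}\}$ (maximal robust positively invariant set). The set of disease-free equilibria is $\mathcal{E}:=\{(S,0,0): S\in[0,1]\}$. *)

theory Defs
  imports "HOL-Analysis.Analysis"
begin

type_synonym state = "real \<times> real \<times> real"   (* (S, E, I) *)
type_synonym control = "real \<times> real"          (* (beta, gamma) *)

definition seir_rhs :: "real \<Rightarrow> control \<Rightarrow> state \<Rightarrow> state" where
  "seir_rhs eta u x = (case x of (S, E, I) \<Rightarrow> case u of (b, g) \<Rightarrow>
      (- b * S * I, b * S * I - eta * E, eta * E - g * I))"

definition Uset :: "real \<Rightarrow> real \<Rightarrow> real \<Rightarrow> real \<Rightarrow> control set" where
  "Uset bmin bnom gnom gmax = {bmin..bnom} \<times> {gnom..gmax}"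

definition admissible :: "real \<Rightarrow> real \<Rightarrow> real \<Rightarrow> real \<Rightarrow> (real \<Rightarrow> control) \<Rightarrow> bool" where
  "admissible bmin bnom gnom gmax u \<longleftrightarrow>
     u \<in> borel_measurable (restrict_space lborel {0..}) \<and>
     (\<forall>T\<ge>0. u integrable_on {0..T}) \<and>
     (\<forall>t\<ge>0. u t \<in> Uset bmin bnom gnom gmax)"

definition is_sol :: "real \<Rightarrow> (real \<Rightarrow> control) \<Rightarrow> state \<Rightarrow> (real \<Rightarrow> state) \<Rightarrow> bool" where
  "is_sol eta u x0 x \<longleftrightarrow> x 0 = x0 \<and>
     (\<forall>t\<ge>0. ((\<lambda>s. seir_rhs eta (u s) (x s)) has_integral (x t - x0)) {0..t})"

definition Pi_set :: "state set" where
  "Pi_set = {(S, E, I). 0 \<le> S \<and> S \<le> 1 \<and> 0 \<le> E \<and> E \<le> 1 \<and> 0 \<le> I \<and> I \<le> 1 \<and> S + E + I \<le> 1}"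

definition G_Pi :: "real \<Rightarrow> state set" where
  "G_Pi Imax = {x \<in> Pi_set. snd (snd x) \<le> Imax}"

definition MRPI :: "real \<Rightarrow> real \<Rightarrow> real \<Rightarrow> real \<Rightarrow> real \<Rightarrow> real \<Rightarrow> state set" where
  "MRPI eta bmin bnom gnom gmax Imax =
     {x0 \<in> G_Pi Imax. \<forall>u. admissible bmin bnom gnom gmax u \<longrightarrow>
        (\<forall>x. is_sol eta u x0 x \<longrightarrow> (\<forall>t\<ge>0. x t \<in> G_Pi Imax))}"

definition DFE :: "state set" where
  "DFE = {(S, 0, 0) | S. 0 \<le> S \<and> S \<le> 1}"

definition Xf :: "real \<Rightarrow> real \<Rightarrow> real \<Rightarrow> real \<Rightarrow> state set" where
  "Xf eta bnom gnom Imax =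
     {(S, E, I) \<in> Pi_set. S \<le> gnom / bnom \<and> I \<le> Imax \<and> E \<le> gnom / eta * Imax} \<union> DFE"

end

theory Submission
  imports Defs
begin

lemma hi_eq: "(f has_integral i) S \<Longrightarrow> (\<And>x. f x = g x) \<Longrightarrow> i = j \<Longrightarrow> (g has_integral j) S"
  by (metis ext)

lemma cont_from_int:
  fixes h F :: "real \<Rightarrow> real"
  assumes "\<And>t. t \<in> {a..b} \<Longrightarrow> (h has_integral (F t - F a)) {a..t}"
  shows "continuous_on {a..b} F"
proof (cases "a \<le> b")
  case False then show ?thesis by simp
next
  case True
  have hi: "h integrable_on {a..b}" using assms[of b] True has_integral_integrable by fastforce
  have "continuous_on {a..b} (\<lambda>t. F a + integral {a..t} h)"
    by (intro continuous_intros indefinite_integral_continuous_1 hi)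
  moreover have "F a + integral {a..t} h = F t" if "t \<in> {a..b}" for t
  proof -
    have "integral {a..t} h = F t - F a" using assms[OF that] integral_unique by blast
    then show ?thesis by simp
  qed
  ultimately show ?thesis using continuous_on_cong[of "{a..b}" "{a..b}" "\<lambda>t. F a + integral {a..t} h" F] by simp
qed

lemma shift_int:
  fixes h F :: "real \<Rightarrow> real"
  assumes "\<And>t. t \<ge> 0 \<Longrightarrow> (h has_integral (F t - F 0)) {0..t}" "0 \<le> a" "a \<le> t"
  shows "(h has_integral (F t - F a)) {a..t}"
proof -
  have i1: "h integrable_on {0..t}" proof -
    have "t \<ge> 0" using assms(2,3) by linarith
    then show ?thesis using assms(1)[of t] has_integral_integrable by blast
  qed
  have "integral {0..a} h + integral {a..t} h = integral {0..t} h"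
    using Henstock_Kurzweil_Integration.integral_combine[OF assms(2,3) i1] .
  moreover have "integral {0..a} h = F a - F 0" "integral {0..t} h = F t - F 0"
    using assms by (auto intro: integral_unique)
  moreover have "h integrable_on {a..t}" using i1 integrable_subinterval_real assms by fastforce
  ultimately have "integral {a..t} h = F t - F a" and "h integrable_on {a..t}" by linarith+
  then show ?thesis using has_integral_integrable_integral by metis
qed

lemma gronwall0:
  fixes w :: "real \<Rightarrow> real"
  assumes cw: "continuous_on {a..b} w" and nn: "\<And>t. t\<in>{a..b} \<Longrightarrow> 0 \<le> w t" and K: "K \<ge> 0"
    and le: "\<And>t. t\<in>{a..b} \<Longrightarrow> w t \<le> K * integral {a..t} w"
  shows "\<And>t. t\<in>{a..b} \<Longrightarrow> w t = 0"
proof -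
  define d where "d = 1 / (2*K+1)"
  have d: "d > 0" "K * d \<le> 1/2" using K by (auto simp: d_def field_simps)
  have wi: "\<And>c e. a \<le> c \<Longrightarrow> e \<le> b \<Longrightarrow> w integrable_on {c..e}"
    by (meson atLeastatMost_subset_iff cw continuous_on_subset integrable_continuous_interval order_refl)
  have P: "\<forall>t\<in>{a..b}. t \<le> a + real n * d \<longrightarrow> w t = 0" for n
  proof (induction n)
    case 0
    show ?case
    proof (intro ballI impI)
      fix t assume t: "t \<in> {a..b}" "t \<le> a + real 0 * d"
      then have "t = a" by auto
      then show "w t = 0" using le[OF t(1)] nn[OF t(1)] by simp
    qed
  next
    case (Suc n)
    define c where "c = a + real n * d"
    define e where "e = min (a + real (Suc n) * d) b"
    show ?case
    proof (cases "c \<le> b")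
      case False
      then show ?thesis using Suc.IH c_def by fastforce
    next
      case True
      have ce: "c \<le> e" using True d by (auto simp: c_def e_def field_simps)
      have ac: "a \<le> c" using d by (simp add: c_def)
      have "{c..e} \<subseteq> {a..b}" using ac e_def by auto
      then have cwe: "continuous_on {c..e} w" using cw continuous_on_subset by blast
      have "{c..e} \<noteq> {}" using ce by simp
      then obtain t1 where t1: "t1 \<in> {c..e}" "\<And>t. t\<in>{c..e} \<Longrightarrow> w t \<le> w t1"
        using continuous_attains_sup[OF compact_Icc _ cwe] by blast
      define M where "M = w t1"
      have bnd: "w t \<le> K * d * M" if t: "t \<in> {c..e}" for t
      proof -
        have tb: "t \<in> {a..b}" using t ac e_def by auto
        have at1: "a \<le> t1" using t1 ac by auto
        have "integral {a..c} w + integral {c..t} w = integral {a..t} w"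
          using Henstock_Kurzweil_Integration.integral_combine[of a c t w] ac t wi[of a t] tb by auto
        moreover have "integral {a..c} w = 0"
        proof -
          have "integral {a..c} w = integral {a..c} (\<lambda>_. 0::real)"
            using Suc.IH c_def True by (intro integral_cong) auto
          then show ?thesis by simp
        qed
        moreover have "integral {c..t} w \<le> integral {c..t} (\<lambda>_. M)"
          using wi[of c t] ac t tb t1 M_def by (intro integral_le) auto
        moreover have "integral {c..t} (\<lambda>_. M) = (t - c) * M" using t by simp
        moreover have "(t - c) * M \<le> d * M"
        proof (rule mult_right_mono)
          have "t \<le> a + real (Suc n) * d" using t e_def by simp
          then show "t - c \<le> d" using c_def by (simp add: algebra_simps)
          show "0 \<le> M" using M_def nn[of t1] at1 t1(1) e_def by simp
        qed
        ultimately have "integral {a..t} w \<le> d * M" by linarith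
        then show ?thesis using le[OF tb] K by (metis mult.assoc mult_left_mono order_trans)
      qed
      have M0: "M \<ge> 0" using nn t1 ac e_def M_def by auto
      have "M \<le> K * d * M" using bnd[OF t1(1)] M_def by simp
      also have "\<dots> \<le> M / 2" using d M0 mult_right_mono[OF d(2) M0] by simp
      finally have "M = 0" using M0 by simp
      show ?thesis
      proof (intro ballI impI)
        fix t assume t: "t \<in> {a..b}" "t \<le> a + real (Suc n) * d"
        show "w t = 0"
        proof (cases "t \<le> c")
          case True then show ?thesis using Suc.IH t c_def by auto
        next
          case False
          then have "t \<in> {c..e}" using t e_def by auto
          then have "w t \<le> 0" using t1 M_def \<open>M = 0\<close> by metis
          then show ?thesis using nn[OF t(1)] by linarith
        qed
      qed
    qed
  qed
  fix t assume t: "t \<in> {a..b}"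
  obtain n :: nat where "(t - a) / d < real n" using reals_Archimedean2 by blast
  then have "t \<le> a + real n * d" using d by (simp add: field_simps)
  then show "w t = 0" using P t by blast
qed

lemma barrier:
  fixes y h :: "'i \<Rightarrow> real \<Rightarrow> real" and A :: "'i set"
  assumes fin: "finite A" and K: "K \<ge> 0"
    and int: "\<And>i t. i \<in> A \<Longrightarrow> t \<in> {a..b} \<Longrightarrow> (h i has_integral (y i t - y i a)) {a..t}"
    and init: "\<And>i. i \<in> A \<Longrightarrow> y i a \<le> 0"
    and bnd: "\<And>i s. i \<in> A \<Longrightarrow> s \<in> {a..b} \<Longrightarrow> y i s > 0 \<Longrightarrow>
                 h i s \<le> K * (\<Sum>j\<in>A. max (y j s) 0)"
  shows "\<And>i t. i \<in> A \<Longrightarrow> t \<in> {a..b} \<Longrightarrow> y i t \<le> 0"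
proof -
  define w where "w s = (\<Sum>j\<in>A. max (y j s) 0)" for s
  have cy: "continuous_on {a..b} (y i)" if "i \<in> A" for i
    using cont_from_int[of a b "h i" "y i"] int that by blast
  have cw: "continuous_on {a..b} w"
    unfolding w_def by (intro continuous_intros cy) 
  have wnn: "0 \<le> w s" for s unfolding w_def by (intro sum_nonneg) auto
  have wi: "\<And>c e. a \<le> c \<Longrightarrow> e \<le> b \<Longrightarrow> w integrable_on {c..e}"
    by (meson atLeastatMost_subset_iff cw continuous_on_subset integrable_continuous_interval order_refl)
  have key: "max (y i t) 0 \<le> K * integral {a..t} w" if i: "i \<in> A" and t: "t \<in> {a..b}" for i t
  proof (cases "y i t \<le> 0")
    case True
    have "0 \<le> integral {a..t} w" using wi[of a t] t wnn by (intro integral_nonneg) auto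
    then show ?thesis using True K by simp
  next
    case False
    define Z where "Z = {a..t} \<inter> y i -` {..0}"
    have cyt: "continuous_on {a..t} (y i)" using cy[OF i] t continuous_on_subset by fastforce
    have "closed Z" unfolding Z_def by (intro continuous_closed_preimage cyt) auto
    moreover have "bdd_above Z" unfolding Z_def by (rule bdd_aboveI[of _ t]) auto
    moreover have aZ: "a \<in> Z" unfolding Z_def using init[OF i] t by auto
    ultimately have t0Z: "Sup Z \<in> Z" using closed_contains_Sup by blast
    define t0 where "t0 = Sup Z"
    have t0: "a \<le> t0" "t0 \<le> t" "y i t0 \<le> 0" using t0Z unfolding t0_def Z_def by auto
    have pos: "y i s > 0" if "s \<in> {t0..t}" "s \<noteq> t0" for s
    proof (rule ccontr)
      assume "\<not> y i s > 0"
      then have "s \<in> Z" unfolding Z_def using that t0 by auto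
      then have "s \<le> t0" unfolding t0_def using \<open>bdd_above Z\<close> cSup_upper by blast
      then show False using that by auto
    qed
    have tb: "t \<in> {a..b}" using t by auto
    have hi: "h i integrable_on {a..t}" using int[OF i tb] has_integral_integrable by blast
    have hi0: "h i integrable_on {t0..t}" using integrable_subinterval_real[OF hi] t0 by auto
    have "integral {a..t0} (h i) + integral {t0..t} (h i) = integral {a..t} (h i)"
      using Henstock_Kurzweil_Integration.integral_combine[OF t0(1,2) hi] .
    moreover have "integral {a..t0} (h i) = y i t0 - y i a" using int[OF i] t0 t
      by (intro integral_unique) auto
    moreover have "integral {a..t} (h i) = y i t - y i a" using int[OF i tb] by (intro integral_unique)
    ultimately have eq: "y i t - y i t0 = integral {t0..t} (h i)" by linarith
    define g where "g s = (if s = t0 then K * w s else h i s)" for s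
    have "integral {t0..t} (h i) = integral {t0..t} g"
      by (rule integral_spike[of "{t0}"]) (auto simp: g_def)
    moreover have gi: "g integrable_on {t0..t}"
      by (rule integrable_spike[OF hi0, of "{t0}"]) (auto simp: g_def)
    moreover have "integral {t0..t} g \<le> integral {t0..t} (\<lambda>s. K * w s)"
    proof (rule integral_le[OF gi])
      show "(\<lambda>s. K * w s) integrable_on {t0..t}" using integrable_cmul[OF wi[of t0 t], of K] t0 t by auto
      fix s assume s: "s \<in> {t0..t}"
      show "g s \<le> K * w s"
      proof (cases "s = t0")
        case True then show ?thesis by (simp add: g_def)
      next
        case False
        have "s \<in> {a..b}" using s t0 t by auto
        then show ?thesis using bnd[OF i _ pos[OF s False]] False by (simp add: g_def w_def)
      qed
    qed
    moreover have "integral {t0..t} (\<lambda>s. K * w s) = K * integral {t0..t} w" by simp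
    moreover have "integral {t0..t} w \<le> integral {a..t} w"
    proof -
      have "integral {a..t0} w + integral {t0..t} w = integral {a..t} w"
        using Henstock_Kurzweil_Integration.integral_combine[OF t0(1,2) wi[of a t]] t by auto
      moreover have "0 \<le> integral {a..t0} w" using wi[of a t0] t0 t wnn by (intro integral_nonneg) auto
      ultimately show ?thesis by linarith
    qed
    ultimately have "y i t - y i t0 \<le> K * integral {a..t} w"
      using eq K mult_left_mono[of "integral {t0..t} w" "integral {a..t} w" K] by linarith
    then show ?thesis using t0(3) False by simp
  qed
  have wle: "w t \<le> (real (card A) * K) * integral {a..t} w" if t: "t \<in> {a..b}" for t
  proof -
    have "(\<Sum>j\<in>A. max (y j t) 0) \<le> real (card A) * (K * integral {a..t} w)"
      by (rule sum_bounded_above) (use key t in auto)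
    then have "w t \<le> real (card A) * (K * integral {a..t} w)" by (simp add: w_def)
    then show ?thesis by (simp add: mult.assoc)
  qed
  have w0: "\<And>t. t \<in> {a..b} \<Longrightarrow> w t = 0"
    by (rule gronwall0[OF cw wnn _ wle]) (use K in auto)
  fix i t assume i: "i \<in> A" and t: "t \<in> {a..b}"
  have "max (y i t) 0 \<le> (\<Sum>j\<in>A. max (y j t) 0)"
    by (rule member_le_sum[OF i _ fin]) auto
  then have "max (y i t) 0 \<le> w t" by (simp add: w_def)
  then show "y i t \<le> 0" using w0[OF t] by simp
qed

lemma est_main:
  fixes S E I b g eta bnom gnom gmax Imax B :: real
  assumes eta: "eta > 0" and bn: "bnom > 0" and gn: "gnom > 0" and Im: "Imax > 0"
    and b: "0 < b" "b \<le> bnom" and g: "gnom \<le> g" "g \<le> gmax"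
    and SB: "\<bar>S\<bar> \<le> B" and IB: "\<bar>I\<bar> \<le> B"
  defines "w \<equiv> max (-S) 0 + (max (-E) 0 + (max (-I) 0 + (max (S - gnom/bnom) 0 +
      (max (E - gnom/eta*Imax) 0 + (max (I - Imax) 0 + max (S+E+I-1) 0)))))"
    and "K \<equiv> bnom*B + gnom + gmax + eta"
  shows "-S > 0 \<Longrightarrow> b*S*I \<le> K*w"
    and "-E > 0 \<Longrightarrow> -(b*S*I - eta*E) \<le> K*w"
    and "-I > 0 \<Longrightarrow> -(eta*E - g*I) \<le> K*w"
    and "S - gnom/bnom > 0 \<Longrightarrow> -(b*S*I) \<le> K*w"
    and "E - gnom/eta*Imax > 0 \<Longrightarrow> b*S*I - eta*E \<le> K*w"
    and "I - Imax > 0 \<Longrightarrow> eta*E - g*I \<le> K*w"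
    and "S+E+I-1 > 0 \<Longrightarrow> -(g*I) \<le> K*w"
proof -
  define q where "q = b*S*I"
  define p1 where "p1 = max (-S) 0"
  define p2 where "p2 = max (-E) 0"
  define p3 where "p3 = max (-I) 0"
  define p4 where "p4 = max (S - gnom/bnom) 0"
  define p5 where "p5 = max (E - gnom/eta*Imax) 0"
  define p6 where "p6 = max (I - Imax) 0"
  define p7 where "p7 = max (S+E+I-1) 0"
  have wdef: "w = p1+p2+p3+p4+p5+p6+p7" unfolding w_def p1_def p2_def p3_def p4_def p5_def p6_def p7_def by simp
  have pnn: "0\<le>p1" "0\<le>p2" "0\<le>p3" "0\<le>p4" "0\<le>p5" "0\<le>p6" "0\<le>p7"
    unfolding p1_def p2_def p3_def p4_def p5_def p6_def p7_def by auto
  have B0: "B \<ge> 0" using SB by linarith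
  have bB: "0 \<le> bnom*B" using bn B0 by simp
  have Kw: "K*w = bnom*B*w + gnom*w + gmax*w + eta*w" unfolding K_def by (simp add: algebra_simps)
  have w0: "0 \<le> w" using pnn wdef by linarith
  have lw: "bnom*B*p \<le> bnom*B*w" "gnom*p \<le> gnom*w" "gmax*p \<le> gmax*w" "eta*p \<le> eta*w"
    if "p \<le> w" for p using that bB gn eta g mult_left_mono by (auto intro: mult_left_mono)
  have ws: "p1 \<le> w" "p2 \<le> w" "p3 \<le> w" "p4 \<le> w" "p5 \<le> w" "p6 \<le> w" "p7 \<le> w" "p1 + p3 \<le> w"
    using pnn wdef by linarith+
  have nn: "0 \<le> gnom*w" "0 \<le> gmax*w" "0 \<le> eta*w" "0 \<le> bnom*B*w"
    using w0 gn eta g bB by auto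
  have qI: "\<bar>q\<bar> \<le> bnom*B*\<bar>I\<bar>"
  proof -
    have "\<bar>q\<bar> = b*\<bar>S\<bar>*\<bar>I\<bar>" using b by (simp add: q_def abs_mult)
    also have "\<dots> \<le> bnom*B*\<bar>I\<bar>" using b SB by (intro mult_right_mono mult_mono) auto
    finally show ?thesis .
  qed
  have qS: "\<bar>q\<bar> \<le> bnom*B*\<bar>S\<bar>"
  proof -
    have "\<bar>q\<bar> = b*\<bar>I\<bar>*\<bar>S\<bar>" using b by (simp add: q_def abs_mult)
    also have "\<dots> \<le> bnom*B*\<bar>S\<bar>" using b IB by (intro mult_right_mono mult_mono) auto
    finally show ?thesis .
  qed
  have qIn: "I \<le> 0 \<Longrightarrow> \<bar>q\<bar> \<le> bnom*B*p3" using qI by (simp add: p3_def)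
  have qSn: "S \<le> 0 \<Longrightarrow> \<bar>q\<bar> \<le> bnom*B*p1" using qS by (simp add: p1_def)
  have sg1: "S \<ge> 0 \<Longrightarrow> I \<ge> 0 \<Longrightarrow> q \<ge> 0" using b by (simp add: q_def)
  have sg2: "S \<le> 0 \<Longrightarrow> I \<ge> 0 \<Longrightarrow> q \<le> 0" using b unfolding q_def
    by (metis mult_nonneg_nonneg mult_nonpos_nonneg less_eq_real_def mult.commute mult_nonneg_nonpos)
  have sg3: "S \<ge> 0 \<Longrightarrow> I \<le> 0 \<Longrightarrow> q \<le> 0" using b unfolding q_def
    by (simp add: mult_nonneg_nonpos)
  have sss: "bnom * (gnom/bnom) = gnom" using bn by simp
  have eee: "eta * (gnom/eta*Imax) = gnom*Imax" using eta by simp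
  have q5: "q \<le> gnom*Imax + gnom*p6 + bnom*B*p4" if "S \<ge> 0" "I \<ge> 0"
  proof -
    have "q \<le> bnom*S*I" unfolding q_def using that b by (intro mult_right_mono) auto
    also have "\<dots> \<le> bnom*(gnom/bnom + p4)*I" unfolding p4_def using that bn
      by (intro mult_right_mono mult_left_mono) auto
    also have "\<dots> = gnom*I + bnom*p4*I" using sss by (simp add: algebra_simps)
    also have "\<dots> \<le> gnom*(Imax + p6) + bnom*p4*B"
      using that IB gn bn pnn unfolding p6_def
      by (intro add_mono mult_left_mono) auto
    finally show ?thesis by (simp add: algebra_simps)
  qed
  have gI: "I \<ge> 0 \<Longrightarrow> g*I \<ge> gnom*I" using g by (simp add: mult_right_mono)
  have gI2: "I \<le> 0 \<Longrightarrow> -(g*I) \<le> gmax*p3" unfolding p3_def using g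
    by (simp add: mult_right_mono_neg)
  have gI3: "I \<le> 0 \<Longrightarrow> g*I \<le> 0" using g gn by (simp add: mult_nonneg_nonpos)
  have eE: "E \<le> 0 \<Longrightarrow> eta*E \<le> 0" using eta by (simp add: mult_nonneg_nonpos)
  have eE2: "E \<le> 0 \<Longrightarrow> -(eta*E) \<le> eta*p2" unfolding p2_def using eta by simp
  have eE3: "eta*E \<le> gnom*Imax + eta*p5"
  proof -
    have "E \<le> gnom/eta*Imax + p5" unfolding p5_def by simp
    then have "eta*E \<le> eta*(gnom/eta*Imax + p5)" using eta by (intro mult_left_mono) auto
    then show ?thesis using eee by (simp add: algebra_simps)
  qed
  have eE4: "eta*E > gnom*Imax" if "E > gnom/eta*Imax"
  proof -
    have "eta*E > eta*(gnom/eta*Imax)" using that eta by (intro mult_strict_left_mono)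
    then show ?thesis using eee by simp
  qed
  have gI4: "g*I > gnom*Imax" if "I > Imax"
  proof -
    have "gnom*Imax < gnom*I" using that gn by simp
    also have "\<dots> \<le> g*I" using g that Im by (intro mult_right_mono) auto
    finally show ?thesis .
  qed
  note L = lw[OF ws(1)] lw[OF ws(2)] lw[OF ws(3)] lw[OF ws(4)] lw[OF ws(5)] lw[OF ws(6)] lw[OF ws(7)] lw[OF ws(8)]
  have qa: "q \<le> \<bar>q\<bar>" "-q \<le> \<bar>q\<bar>" by auto
  have qq: "b*S*I = q" by (simp add: q_def)
  have KB: "bnom*B*w \<le> K*w" "gnom*w \<le> K*w" "gmax*w \<le> K*w" "eta*w \<le> K*w" "0 \<le> K*w"
    using Kw nn by linarith+
  have mq1: "-q \<le> bnom*B*w" if "S \<le> 0 \<or> I \<le> 0"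
  proof (cases "I \<le> 0")
    case True then show ?thesis using qIn L(9) qa(2) by linarith
  next
    case False then show ?thesis using that qSn L(1) qa(2) by linarith
  qed
  have mq2: "q \<le> bnom*B*w" if "S \<le> 0 \<and> I \<le> 0"
    using that qIn L(9) qa(1) by linarith
  show "-S > 0 \<Longrightarrow> b*S*I \<le> K*w"
  proof -
    assume "-S > 0"
    show ?thesis
    proof (cases "I \<ge> 0")
      case True then show ?thesis unfolding qq using sg2 \<open>-S > 0\<close> KB(5) by linarith
    next
      case False then show ?thesis unfolding qq using mq2 \<open>-S > 0\<close> KB(1) by linarith
    qed
  qed
  show "-E > 0 \<Longrightarrow> -(b*S*I - eta*E) \<le> K*w"
  proof -
    assume E: "-E > 0"
    have "-q \<le> bnom*B*w"
    proof (cases "S \<ge> 0 \<and> I \<ge> 0")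
      case True then show ?thesis using sg1 nn(4) by force
    next
      case False then show ?thesis using mq1 by linarith
    qed
    then show ?thesis unfolding qq using eE E KB(1) by linarith
  qed
  show "-I > 0 \<Longrightarrow> -(eta*E - g*I) \<le> K*w"
  proof -
    assume I: "-I > 0"
    have "-(eta*E) \<le> eta*w"
    proof (cases "E \<le> 0")
      case True then show ?thesis using eE2 L(8) by linarith
    next
      case False then show ?thesis using eta nn(3) mult_pos_pos[OF eta, of E] by linarith
    qed
    then show ?thesis using gI3 I KB(4) by linarith
  qed
  show "S - gnom/bnom > 0 \<Longrightarrow> -(b*S*I) \<le> K*w"
  proof -
    assume "S - gnom/bnom > 0"
    moreover have "gnom/bnom > 0" using gn bn by simp
    ultimately have S0: "S \<ge> 0" by linarith
    show ?thesis
    proof (cases "I \<ge> 0")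
      case True then show ?thesis unfolding qq using sg1 S0 KB(5) by linarith
    next
      case False then show ?thesis unfolding qq using mq1 KB(1) by linarith
    qed
  qed
  show "E - gnom/eta*Imax > 0 \<Longrightarrow> b*S*I - eta*E \<le> K*w"
  proof -
    assume "E - gnom/eta*Imax > 0"
    then have e: "eta*E > gnom*Imax" using eE4 by linarith
    have gi0: "0 \<le> gnom*Imax" using gn Im by simp
    have "q \<le> gnom*Imax + bnom*B*w + gnom*w"
    proof (cases "S \<ge> 0 \<and> I \<ge> 0")
      case True
      then have "q \<le> gnom*Imax + gnom*p6 + bnom*B*p4" using q5 by blast
      moreover have "gnom*p6 \<le> gnom*w" "bnom*B*p4 \<le> bnom*B*w" using L(22) L(13) .
      ultimately show ?thesis by linarith
    next
      case False
      show ?thesis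
      proof (cases "S \<le> 0 \<and> I \<le> 0")
        case True then have "q \<le> bnom*B*w" using mq2 by blast
        then show ?thesis using nn(1) gi0 by linarith
      next
        case False2: False
        then have "q \<le> 0" using False sg2 sg3 by (cases "S \<ge> 0") (auto)
        then show ?thesis using nn(1,4) gi0 by linarith
      qed
    qed
    then show ?thesis unfolding qq using e Kw nn by linarith
  qed
  show "I - Imax > 0 \<Longrightarrow> eta*E - g*I \<le> K*w"
    using gI4 eE3 L(20) KB(4) by linarith
  show "S+E+I-1 > 0 \<Longrightarrow> -(g*I) \<le> K*w"
  proof (cases "I \<ge> 0")
    case True then show "-(g*I) \<le> K*w" using gI gn mult_nonneg_nonneg[of gnom I] KB(5) by linarith
  next
    case False then show "-(g*I) \<le> K*w" using gI2 L(11) KB(3) by linarith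
  qed
qed

definition "SS x t = fst (x t)"
definition "EE x t = fst (snd (x t))"
definition "II x t = snd (snd (x t))"
definition "bb u s = fst (u s)"
definition "gg u s = snd (u s)"

lemma rhs_comp:
  "fst (seir_rhs eta (u s) (x s)) = - bb u s * SS x s * II x s"
  "fst (snd (seir_rhs eta (u s) (x s))) = bb u s * SS x s * II x s - eta * EE x s"
  "snd (snd (seir_rhs eta (u s) (x s))) = eta * EE x s - gg u s * II x s"
  by (simp_all add: seir_rhs_def SS_def EE_def II_def bb_def gg_def split: prod.splits)

lemma sol_comp0:
  assumes sol: "is_sol eta u x0 x" and t: "0 \<le> t"
  shows "((\<lambda>s. - bb u s * SS x s * II x s) has_integral (SS x t - SS x 0)) {0..t}"
    and "((\<lambda>s. bb u s * SS x s * II x s - eta * EE x s) has_integral (EE x t - EE x 0)) {0..t}"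
    and "((\<lambda>s. eta * EE x s - gg u s * II x s) has_integral (II x t - II x 0)) {0..t}"
proof -
  have x00: "x 0 = x0" and H: "((\<lambda>s. seir_rhs eta (u s) (x s)) has_integral (x t - x 0)) {0..t}"
    using sol t unfolding is_sol_def by auto
  have L1: "bounded_linear (\<lambda>p::state. fst p)" by (rule bounded_linear_fst)
  have L2: "bounded_linear (\<lambda>p::state. fst (snd p))"
    using bounded_linear_compose[OF bounded_linear_fst bounded_linear_snd] by (simp add: o_def)
  have L3: "bounded_linear (\<lambda>p::state. snd (snd p))"
    using bounded_linear_compose[OF bounded_linear_snd bounded_linear_snd] by (simp add: o_def)
  show "((\<lambda>s. - bb u s * SS x s * II x s) has_integral (SS x t - SS x 0)) {0..t}"
    using has_integral_linear[OF H L1] by (simp add: o_def rhs_comp SS_def)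
  show "((\<lambda>s. bb u s * SS x s * II x s - eta * EE x s) has_integral (EE x t - EE x 0)) {0..t}"
    using has_integral_linear[OF H L2] by (simp add: o_def rhs_comp EE_def)
  show "((\<lambda>s. eta * EE x s - gg u s * II x s) has_integral (II x t - II x 0)) {0..t}"
    using has_integral_linear[OF H L3] by (simp add: o_def rhs_comp II_def)
qed

lemma sol_comp:
  assumes sol: "is_sol eta u x0 x" and a: "0 \<le> a" "a \<le> t"
  shows "((\<lambda>s. - bb u s * SS x s * II x s) has_integral (SS x t - SS x a)) {a..t}"
    and "((\<lambda>s. bb u s * SS x s * II x s - eta * EE x s) has_integral (EE x t - EE x a)) {a..t}"
    and "((\<lambda>s. eta * EE x s - gg u s * II x s) has_integral (II x t - II x a)) {a..t}"
  using shift_int[OF sol_comp0(1)[OF sol] a] shift_int[OF sol_comp0(2)[OF sol] a]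
    shift_int[OF sol_comp0(3)[OF sol] a] by auto

lemma sol_cont:
  assumes sol: "is_sol eta u x0 x" and a0: "0 \<le> a"
  shows "continuous_on {a..b} (SS x)" "continuous_on {a..b} (EE x)" "continuous_on {a..b} (II x)"
proof -
  show "continuous_on {a..b} (SS x)"
  proof (rule cont_from_int)
    fix t assume "t \<in> {a..b}"
    then have "a \<le> t" by simp
    then show "((\<lambda>s. - bb u s * SS x s * II x s) has_integral (SS x t - SS x a)) {a..t}"
      by (rule sol_comp(1)[OF sol a0])
  qed
  show "continuous_on {a..b} (EE x)"
  proof (rule cont_from_int)
    fix t assume "t \<in> {a..b}"
    then have "a \<le> t" by simp
    then show "((\<lambda>s. bb u s * SS x s * II x s - eta * EE x s) has_integral (EE x t - EE x a)) {a..t}"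
      by (rule sol_comp(2)[OF sol a0])
  qed
  show "continuous_on {a..b} (II x)"
  proof (rule cont_from_int)
    fix t assume "t \<in> {a..b}"
    then have "a \<le> t" by simp
    then show "((\<lambda>s. eta * EE x s - gg u s * II x s) has_integral (II x t - II x a)) {a..t}"
      by (rule sol_comp(3)[OF sol a0])
  qed
qed

lemma adm_bounds:
  assumes "admissible bmin bnom gnom gmax u" "0 \<le> s"
  shows "bmin \<le> bb u s" "bb u s \<le> bnom" "gnom \<le> gg u s" "gg u s \<le> gmax"
  using assms unfolding admissible_def Uset_def bb_def gg_def by (auto simp: mem_Times_iff)

lemma sol_bound:
  assumes sol: "is_sol eta u x0 x"
  obtains B where "\<And>s. s \<in> {0..T} \<Longrightarrow> \<bar>SS x s\<bar> \<le> B \<and> \<bar>EE x s\<bar> \<le> B \<and> \<bar>II x s\<bar> \<le> B"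
proof (cases "0 \<le> T")
  case False then show ?thesis using that by auto
next
  case True
  have c: "continuous_on {0..T} (\<lambda>s. \<bar>SS x s\<bar> + \<bar>EE x s\<bar> + \<bar>II x s\<bar>)"
    using sol_cont[OF sol order_refl, of T] by (intro continuous_intros) auto
  obtain m where "m \<in> {0..T}" "\<And>s. s \<in> {0..T} \<Longrightarrow> \<bar>SS x s\<bar> + \<bar>EE x s\<bar> + \<bar>II x s\<bar> \<le>
      \<bar>SS x m\<bar> + \<bar>EE x m\<bar> + \<bar>II x m\<bar>"
    using continuous_attains_sup[OF compact_Icc _ c] True by auto
  then have "\<And>s. s \<in> {0..T} \<Longrightarrow> \<bar>SS x s\<bar> \<le> \<bar>SS x m\<bar> + \<bar>EE x m\<bar> + \<bar>II x m\<bar> \<and>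
     \<bar>EE x s\<bar> \<le> \<bar>SS x m\<bar> + \<bar>EE x m\<bar> + \<bar>II x m\<bar> \<and> \<bar>II x s\<bar> \<le> \<bar>SS x m\<bar> + \<bar>EE x m\<bar> + \<bar>II x m\<bar>"
  proof -
    fix s assume "s \<in> {0..T}"
    then have "\<bar>SS x s\<bar> + \<bar>EE x s\<bar> + \<bar>II x s\<bar> \<le> \<bar>SS x m\<bar> + \<bar>EE x m\<bar> + \<bar>II x m\<bar>" by fact
    moreover have "0 \<le> \<bar>SS x s\<bar>" "0 \<le> \<bar>EE x s\<bar>" "0 \<le> \<bar>II x s\<bar>" by auto
    ultimately show "?thesis s" by linarith
  qed
  then show ?thesis using that by blast
qed

lemma main_inv:
  fixes eta bmin bnom gnom gmax Imax :: real
  assumes eta: "eta > 0" and bm: "0 < bmin" "bmin \<le> bnom" and gn: "0 < gnom" "gnom \<le> gmax"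
    and Im: "0 < Imax"
    and adm: "admissible bmin bnom gnom gmax u" and sol: "is_sol eta u x0 x"
    and init: "0 \<le> SS x 0" "0 \<le> EE x 0" "0 \<le> II x 0" "SS x 0 \<le> gnom/bnom"
      "EE x 0 \<le> gnom/eta*Imax" "II x 0 \<le> Imax" "SS x 0 + EE x 0 + II x 0 \<le> 1"
    and t: "0 \<le> t"
  shows "0 \<le> SS x t \<and> 0 \<le> EE x t \<and> 0 \<le> II x t \<and> SS x t \<le> gnom/bnom \<and>
    EE x t \<le> gnom/eta*Imax \<and> II x t \<le> Imax \<and> SS x t + EE x t + II x t \<le> 1"
proof -
  obtain B where B: "\<And>s. s \<in> {0..t} \<Longrightarrow> \<bar>SS x s\<bar> \<le> B \<and> \<bar>EE x s\<bar> \<le> B \<and> \<bar>II x s\<bar> \<le> B"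
    using sol_bound[OF sol] by blast
  define K where "K = bnom*B + gnom + gmax + eta"
  have B0: "0 \<le> B" using B[of 0] t by auto
  have K0: "0 \<le> K" unfolding K_def using B0 bm gn eta by simp
  define A where "A = {0,1,2,3,4,5,6::nat}"
  define y :: "nat \<Rightarrow> real \<Rightarrow> real" where "y i s = (if i = 0 then - SS x s else if i = 1 then - EE x s else if i = 2 then - II x s
     else if i = 3 then SS x s - gnom/bnom else if i = 4 then EE x s - gnom/eta*Imax
     else if i = 5 then II x s - Imax else SS x s + EE x s + II x s - 1)" for i s
  define h :: "nat \<Rightarrow> real \<Rightarrow> real" where "h i s = (if i = 0 then bb u s * SS x s * II x s
     else if i = 1 then -(bb u s * SS x s * II x s - eta * EE x s)
     else if i = 2 then -(eta * EE x s - gg u s * II x s)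
     else if i = 3 then -(bb u s * SS x s * II x s)
     else if i = 4 then bb u s * SS x s * II x s - eta * EE x s
     else if i = 5 then eta * EE x s - gg u s * II x s
     else - (gg u s * II x s))" for i s
  have fin: "finite A" unfolding A_def by simp
  have int: "(h i has_integral (y i \<tau> - y i 0)) {0..\<tau>}" if i: "i \<in> A" and tau: "\<tau> \<in> {0..t}" for i \<tau>
  proof -
    have tau0: "0 \<le> \<tau>" using tau by simp
    note IS = sol_comp(1)[OF sol order_refl tau0]
    note IE = sol_comp(2)[OF sol order_refl tau0]
    note II = sol_comp(3)[OF sol order_refl tau0]
    have "i = 0 \<or> i = 1 \<or> i = 2 \<or> i = 3 \<or> i = 4 \<or> i = 5 \<or> i = 6" using i unfolding A_def by auto
    then show ?thesis
    proof (elim disjE)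
      assume "i = 0" then show ?thesis
        by (intro hi_eq[OF has_integral_neg[OF IS]]) (simp_all add: y_def h_def)
    next
      assume "i = 1" then show ?thesis
        by (intro hi_eq[OF has_integral_neg[OF IE]]) (simp_all add: y_def h_def)
    next
      assume "i = 2" then show ?thesis
        by (intro hi_eq[OF has_integral_neg[OF II]]) (simp_all add: y_def h_def)
    next
      assume "i = 3" then show ?thesis
        by (intro hi_eq[OF IS]) (simp_all add: y_def h_def)
    next
      assume "i = 4" then show ?thesis
        by (intro hi_eq[OF IE]) (simp_all add: y_def h_def)
    next
      assume "i = 5" then show ?thesis
        by (intro hi_eq[OF II]) (simp_all add: y_def h_def)
    next
      assume "i = 6" then show ?thesis
        by (intro hi_eq[OF has_integral_add[OF has_integral_add[OF IS IE] II]]) (simp_all add: y_def h_def algebra_simps)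
    qed
  qed
  have ini: "y i 0 \<le> 0" if "i \<in> A" for i
    using that init unfolding A_def y_def by auto
  have bnd: "h i s \<le> K * (\<Sum>j\<in>A. max (y j s) 0)" if i: "i \<in> A" and s: "s \<in> {0..t}" and pos: "y i s > 0" for i s
  proof -
    have sum: "(\<Sum>j\<in>A. max (y j s) 0) = max (- SS x s) 0 + (max (- EE x s) 0 + (max (- II x s) 0 +
      (max (SS x s - gnom/bnom) 0 + (max (EE x s - gnom/eta*Imax) 0 + (max (II x s - Imax) 0 +
       max (SS x s + EE x s + II x s - 1) 0)))))"
      unfolding A_def by (simp add: y_def)
    have s0: "0 \<le> s" using s by simp
    note ab = adm_bounds[OF adm s0]
    have bB: "\<bar>SS x s\<bar> \<le> B" "\<bar>II x s\<bar> \<le> B" using B[OF s] by auto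
    have bpos: "0 < bb u s" "0 < bnom" using ab(1) bm by linarith+
    note E = est_main[where S="SS x s" and E="EE x s" and I="II x s" and b="bb u s" and g="gg u s"
      and eta=eta and bnom=bnom and gnom=gnom and gmax=gmax and Imax=Imax and B=B,
      OF eta bpos(2) gn(1) Im bpos(1) ab(2) ab(3) ab(4) bB, folded K_def]
    have "i = 0 \<or> i = 1 \<or> i = 2 \<or> i = 3 \<or> i = 4 \<or> i = 5 \<or> i = 6" using i unfolding A_def by auto
    then show ?thesis
    proof (elim disjE)
      assume "i = 0" then show ?thesis using E(1) pos unfolding sum by (simp add: y_def h_def)
    next
      assume "i = 1" then show ?thesis using E(2) pos unfolding sum by (simp add: y_def h_def)
    next
      assume "i = 2" then show ?thesis using E(3) pos unfolding sum by (simp add: y_def h_def)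
    next
      assume "i = 3" then show ?thesis using E(4) pos unfolding sum by (simp add: y_def h_def)
    next
      assume "i = 4" then show ?thesis using E(5) pos unfolding sum by (simp add: y_def h_def)
    next
      assume "i = 5" then show ?thesis using E(6) pos unfolding sum by (simp add: y_def h_def)
    next
      assume "i = 6" then show ?thesis using E(7) pos unfolding sum by (simp add: y_def h_def)
    qed
  qed
  have res: "y i t \<le> 0" if "i \<in> A" for i
    using barrier[OF fin K0 int ini bnd that, of t] t by auto
  show ?thesis using res[of 0] res[of 1] res[of 2] res[of 3] res[of 4] res[of 5] res[of 6]
    unfolding A_def y_def by simp
qed

lemma est_dfe:
  fixes S E I b g eta bnom gmax B S0 :: real
  assumes b: "0 < b" "b \<le> bnom" and g: "0 \<le> g" "g \<le> gmax" and SB: "\<bar>S\<bar> \<le> B" and eta: "eta > 0"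
  defines "w \<equiv> max E 0 + (max (-E) 0 + (max I 0 + (max (-I) 0 + (max (S - S0) 0 + max (S0 - S) 0))))"
  shows "\<bar>b*S*I\<bar> \<le> (bnom*B + eta + gmax) * w"
    "\<bar>b*S*I - eta*E\<bar> \<le> (bnom*B + eta + gmax) * w"
    "\<bar>eta*E - g*I\<bar> \<le> (bnom*B + eta + gmax) * w"
proof -
  have B0: "0 \<le> B" using SB by linarith
  have bB: "0 \<le> bnom*B" using b B0 by simp
  have wE: "\<bar>E\<bar> + \<bar>I\<bar> \<le> w" unfolding w_def by (simp add: max_def abs_if)
  have w0: "0 \<le> w" unfolding w_def by simp
  have q: "\<bar>b*S*I\<bar> \<le> bnom*B*\<bar>I\<bar>"
  proof -
    have "\<bar>b*S*I\<bar> = b*\<bar>S\<bar>*\<bar>I\<bar>" using b by (simp add: abs_mult)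
    also have "\<dots> \<le> bnom*B*\<bar>I\<bar>" using b SB by (intro mult_right_mono mult_mono) auto
    finally show ?thesis .
  qed
  have gi: "\<bar>g*I\<bar> \<le> gmax*\<bar>I\<bar>" using g by (simp add: abs_mult mult_right_mono)
  have ee: "\<bar>eta*E\<bar> = eta*\<bar>E\<bar>" using eta by (simp add: abs_mult)
  have m1: "bnom*B*\<bar>I\<bar> \<le> bnom*B*w" using wE bB by (intro mult_left_mono) auto
  have m2: "eta*\<bar>E\<bar> \<le> eta*w" using wE eta by (intro mult_left_mono) auto
  have m3: "gmax*\<bar>I\<bar> \<le> gmax*w" using wE g by (intro mult_left_mono) auto
  have m4: "0 \<le> eta*w" "0 \<le> gmax*w" "0 \<le> bnom*B*w" using w0 eta g bB by auto
  have Kw: "(bnom*B + eta + gmax) * w = bnom*B*w + eta*w + gmax*w" by (simp add: algebra_simps)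
  show "\<bar>b*S*I\<bar> \<le> (bnom*B + eta + gmax) * w" using q m1 m4 Kw by linarith
  show "\<bar>b*S*I - eta*E\<bar> \<le> (bnom*B + eta + gmax) * w"
    using q m1 m2 m4 Kw ee abs_triangle_ineq4[of "b*S*I" "eta*E"] by linarith
  show "\<bar>eta*E - g*I\<bar> \<le> (bnom*B + eta + gmax) * w"
    using gi m3 m2 m4 Kw ee abs_triangle_ineq4[of "eta*E" "g*I"] by linarith
qed

lemma dfe_inv:
  fixes eta bmin bnom gnom gmax :: real
  assumes eta: "eta > 0" and bm: "0 < bmin" "bmin \<le> bnom" and gn: "0 < gnom" "gnom \<le> gmax"
    and adm: "admissible bmin bnom gnom gmax u" and sol: "is_sol eta u x0 x"
    and init: "EE x 0 = 0" "II x 0 = 0"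
    and t: "0 \<le> t"
  shows "EE x t = 0 \<and> II x t = 0 \<and> SS x t = SS x 0"
proof -
  obtain B where B: "\<And>s. s \<in> {0..t} \<Longrightarrow> \<bar>SS x s\<bar> \<le> B \<and> \<bar>EE x s\<bar> \<le> B \<and> \<bar>II x s\<bar> \<le> B"
    using sol_bound[OF sol] by blast
  define K where "K = bnom*B + eta + gmax"
  have B0: "0 \<le> B" using B[of 0] t by auto
  have K0: "0 \<le> K" unfolding K_def using B0 bm gn eta by simp
  define S0 where "S0 = SS x 0"
  define A where "A = {0,1,2,3,4,5::nat}"
  define y :: "nat \<Rightarrow> real \<Rightarrow> real" where "y i s = (if i = 0 then EE x s else if i = 1 then - EE x s
     else if i = 2 then II x s else if i = 3 then - II x s else if i = 4 then SS x s - S0 else S0 - SS x s)" for i s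
  define h :: "nat \<Rightarrow> real \<Rightarrow> real" where "h i s = (if i = 0 then bb u s * SS x s * II x s - eta * EE x s
     else if i = 1 then -(bb u s * SS x s * II x s - eta * EE x s)
     else if i = 2 then eta * EE x s - gg u s * II x s
     else if i = 3 then -(eta * EE x s - gg u s * II x s)
     else if i = 4 then - bb u s * SS x s * II x s
     else -(- bb u s * SS x s * II x s))" for i s
  have fin: "finite A" unfolding A_def by simp
  have int: "(h i has_integral (y i \<tau> - y i 0)) {0..\<tau>}" if i: "i \<in> A" and tau: "\<tau> \<in> {0..t}" for i \<tau>
  proof -
    have tau0: "0 \<le> \<tau>" using tau by simp
    note IS = sol_comp(1)[OF sol order_refl tau0]
    note IE = sol_comp(2)[OF sol order_refl tau0]
    note II = sol_comp(3)[OF sol order_refl tau0]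
    have "i = 0 \<or> i = 1 \<or> i = 2 \<or> i = 3 \<or> i = 4 \<or> i = 5" using i unfolding A_def by auto
    then show ?thesis
    proof (elim disjE)
      assume "i = 0" then show ?thesis
        by (intro hi_eq[OF IE]) (simp_all add: y_def h_def)
    next
      assume "i = 1" then show ?thesis
        by (intro hi_eq[OF has_integral_neg[OF IE]]) (simp_all add: y_def h_def)
    next
      assume "i = 2" then show ?thesis
        by (intro hi_eq[OF II]) (simp_all add: y_def h_def)
    next
      assume "i = 3" then show ?thesis
        by (intro hi_eq[OF has_integral_neg[OF II]]) (simp_all add: y_def h_def)
    next
      assume "i = 4" then show ?thesis
        by (intro hi_eq[OF IS]) (simp_all add: y_def h_def)
    next
      assume "i = 5" then show ?thesis
        by (intro hi_eq[OF has_integral_neg[OF IS]]) (simp_all add: y_def h_def)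
    qed
  qed
  have ini: "y i 0 \<le> 0" if "i \<in> A" for i
    using that init unfolding A_def y_def S0_def by auto
  have bnd: "h i s \<le> K * (\<Sum>j\<in>A. max (y j s) 0)" if i: "i \<in> A" and s: "s \<in> {0..t}" and pos: "y i s > 0" for i s
  proof -
    have sum: "(\<Sum>j\<in>A. max (y j s) 0) = max (EE x s) 0 + (max (- EE x s) 0 + (max (II x s) 0 +
      (max (- II x s) 0 + (max (SS x s - S0) 0 + max (S0 - SS x s) 0))))"
      unfolding A_def by (simp add: y_def)
    have s0: "0 \<le> s" using s by simp
    note ab = adm_bounds[OF adm s0]
    have bB: "\<bar>SS x s\<bar> \<le> B" using B[OF s] by auto
    have bpos: "0 < bb u s" "0 \<le> gg u s" using ab(1,3) bm gn by linarith+
    note E = est_dfe[where S="SS x s" and E="EE x s" and I="II x s" and b="bb u s" and g="gg u s"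
      and eta=eta and bnom=bnom and gmax=gmax and B=B and S0=S0,
      OF bpos(1) ab(2) bpos(2) ab(4) bB eta, folded K_def]
    have "i = 0 \<or> i = 1 \<or> i = 2 \<or> i = 3 \<or> i = 4 \<or> i = 5" using i unfolding A_def by auto
    then show ?thesis
    proof (elim disjE)
      assume "i = 0" then show ?thesis unfolding sum using E(2) by (simp add: h_def abs_le_iff)
    next
      assume "i = 1" then show ?thesis unfolding sum using E(2) by (simp add: h_def abs_le_iff)
    next
      assume "i = 2" then show ?thesis unfolding sum using E(3) by (simp add: h_def abs_le_iff)
    next
      assume "i = 3" then show ?thesis unfolding sum using E(3) by (simp add: h_def abs_le_iff)
    next
      assume "i = 4" then show ?thesis unfolding sum using E(1) by (simp add: h_def abs_le_iff)
    next
      assume "i = 5" then show ?thesis unfolding sum using E(1) by (simp add: h_def abs_le_iff)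
    qed
  qed
  have res: "y i t \<le> 0" if "i \<in> A" for i
    using barrier[OF fin K0 int ini bnd that, of t] t by auto
  show ?thesis using res[of 0] res[of 1] res[of 2] res[of 3] res[of 4] res[of 5]
    unfolding A_def y_def S0_def by simp
qed

lemma est_decay:
  fixes S E I b g eta bnom gnom rr c lam :: real
  assumes S: "0 \<le> S" "S \<le> rr" and EI: "0 \<le> E" "0 \<le> I" and b: "0 \<le> b" "b \<le> bnom" and g: "gnom \<le> g"
    and pos: "eta > 0" "gnom > 0" "bnom > 0" and rr: "0 \<le> rr"
    and c: "c = (rr*bnom/gnom + 1)/2" "c \<le> 1" and lam: "lam = (1-c)*min eta gnom"
  shows "(b*S*I - eta*E) + c*(eta*E - g*I) \<le> -lam*(E + c*I)"
proof -
  have "0 \<le> rr*bnom/gnom" using rr pos by simp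
  then have c0: "0 \<le> c" unfolding c(1) by simp
  have bS: "b*S \<le> bnom*rr" using b S by (intro mult_mono) auto
  have cg: "c*gnom \<le> c*g" using c0 g by (intro mult_left_mono)
  have key: "bnom*rr - c*gnom = -((1-c)*gnom)" using c pos by (simp add: field_simps)
  have "(b*S - c*g)*I \<le> (-((1-c)*gnom))*I" using bS cg key EI by (intro mult_right_mono) auto
  moreover have eq: "(b*S*I - eta*E) + c*(eta*E - g*I) = -((1-c)*eta*E) + (b*S - c*g)*I"
    by (simp add: algebra_simps)
  define m where "m = min eta gnom"
  have m: "m \<le> eta" "m \<le> gnom" "0 \<le> m" using pos by (auto simp: m_def)
  have "(1-c)*m*E \<le> (1-c)*eta*E" using m c EI by (intro mult_right_mono mult_left_mono) auto
  moreover have "(1-c)*m*(c*I) \<le> (1-c)*gnom*I"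
  proof -
    have "c*I \<le> 1*I" using c(2) EI by (intro mult_right_mono) auto
    then have "c*I \<le> I" by simp
    then have "m*(c*I) \<le> gnom*I" using m EI c0 by (intro mult_mono) auto
    then have "(1-c)*(m*(c*I)) \<le> (1-c)*(gnom*I)" using c(2) by (intro mult_left_mono) auto
    then show ?thesis by (simp only: mult.assoc)
  qed
  moreover have "lam*(E + c*I) = (1-c)*m*E + (1-c)*m*(c*I)" unfolding lam m_def[symmetric] by (simp add: algebra_simps)
  ultimately show ?thesis unfolding eq by (simp add: algebra_simps)
qed

lemma exp_int:
  fixes lam V1 :: real
  assumes "1 \<le> t"
  shows "((\<lambda>s. lam*V1*exp(-lam*(s-1))) has_integral (V1 - V1*exp(-lam*(t-1)))) {1..t}"
proof -
  have "((\<lambda>s. lam*V1*exp(-lam*(s-1))) has_integral ((\<lambda>s. - V1*exp(-lam*(s-1))) t - (\<lambda>s. - V1*exp(-lam*(s-1))) 1)) {1..t}"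
  proof (rule fundamental_theorem_of_calculus[OF assms])
    fix s :: real assume "s \<in> {1..t}"
    have "((\<lambda>s. - V1*exp(-lam*(s-1))) has_real_derivative (lam*V1*exp(-lam*(s-1)))) (at s within {1..t})"
      by (auto intro!: derivative_eq_intros)
    then show "((\<lambda>s. - V1*exp(-lam*(s-1))) has_vector_derivative (lam*V1*exp(-lam*(s-1)))) (at s within {1..t})"
      by (simp add: has_real_derivative_iff_has_vector_derivative)
  qed
  then show ?thesis by simp
qed

lemma decay:
  fixes eta bmin bnom gnom gmax :: real
  assumes eta: "eta > 0" and bm: "0 < bmin" "bmin \<le> bnom" and gn: "0 < gnom" "gnom \<le> gmax"
    and adm: "admissible bmin bnom gnom gmax u" and sol: "is_sol eta u x0 x"
    and inv: "\<And>t. 0 \<le> t \<Longrightarrow> 0 \<le> SS x t \<and> 0 \<le> EE x t \<and> 0 \<le> II x t \<and> SS x t + EE x t + II x t \<le> 1"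
    and S0: "SS x 0 \<le> gnom/bnom" and nz: "EE x 0 \<noteq> 0 \<or> II x 0 \<noteq> 0"
  shows "\<exists>c\<ge>0. \<exists>lam>0. \<forall>t\<ge>0. EE x t + II x t \<le> c * exp (- lam * t)"
proof -
  have bpos: "\<And>s. 0 \<le> s \<Longrightarrow> 0 < bb u s" using adm_bounds(1)[OF adm] bm by (meson less_le_trans)
  have mono: "SS x t \<le> SS x a" if a: "0 \<le> a" "a \<le> t" for a t
  proof -
    have "((\<lambda>s. bb u s * SS x s * II x s) has_integral -(SS x t - SS x a)) {a..t}"
      using has_integral_neg[OF sol_comp(1)[OF sol a]] by simp
    moreover have "0 \<le> bb u s * SS x s * II x s" if "s \<in> {a..t}" for s
    proof -
      have s0: "0 \<le> s" using that a by simp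
      show ?thesis using inv[OF s0] bpos[OF s0] by simp
    qed
    ultimately have "0 \<le> -(SS x t - SS x a)" by (rule has_integral_nonneg)
    then show ?thesis by simp
  qed
  define kk where "kk = gnom/bnom"
  have kk0: "kk > 0" unfolding kk_def using gn bm by simp
  have r1: "SS x 1 < kk"
  proof (rule ccontr)
    assume "\<not> SS x 1 < kk"
    then have Sc: "SS x s = kk" if "s \<in> {0..1}" for s
      using mono[of 0 s] mono[of s 1] S0 that unfolding kk_def by auto
    have int0: "((\<lambda>s. bb u s * SS x s * II x s) has_integral 0) {0..1}"
      using has_integral_neg[OF sol_comp(1)[OF sol order_refl zero_le_one]] Sc[of 0] Sc[of 1] by simp
    have Ic: "continuous_on {0..1} (II x)" by (rule sol_cont(3)[OF sol order_refl])
    have Iint: "II x integrable_on {0..1}" by (rule integrable_continuous_interval[OF Ic])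
    have "integral {0..1} (\<lambda>s. bmin * kk*II x s) \<le> integral {0..1} (\<lambda>s. bb u s * SS x s * II x s)"
    proof (rule integral_le)
      show "(\<lambda>s. bmin * kk*II x s) integrable_on {0..1}" using integrable_cmul[OF Iint, of "bmin * kk"] by simp
      show "(\<lambda>s. bb u s * SS x s * II x s) integrable_on {0..1}" using int0 by blast
      fix s :: real assume s: "s \<in> {0..1}"
      then have s0: "0 \<le> s" by simp
      have "bmin * kk*II x s \<le> bb u s * kk*II x s"
        using adm_bounds(1)[OF adm s0] inv[OF s0] kk0 by (intro mult_right_mono) auto
      then show "bmin * kk*II x s \<le> bb u s * SS x s * II x s" using Sc[OF s] by simp
    qed
    moreover have "integral {0..1} (\<lambda>s. bb u s * SS x s * II x s) = 0" using int0 by (rule integral_unique)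
    ultimately have "bmin * kk*integral {0..1} (II x) \<le> 0" by simp
    moreover have "0 < bmin * kk" using bm kk0 by simp
    ultimately have "integral {0..1} (II x) \<le> 0"
      by (metis mult_le_0_iff linorder_not_less order_less_imp_le)
    moreover have "0 \<le> integral {0..1} (II x)" using Iint inv by (intro integral_nonneg) auto
    ultimately have "integral {0..1} (II x) = 0" by simp
    then have "(II x has_integral 0) {0..1}" using Iint by (metis has_integral_integrable_integral)
    then have I0: "II x s = 0" if "s \<in> {0..1}" for s
      using has_integral_0_cbox_imp_0[of 0 1 "II x" s] Ic inv that by auto
    have "((\<lambda>s. eta * EE x s - gg u s * II x s) has_integral (II x 1 - II x 0)) {0..1}"
      by (rule sol_comp(3)[OF sol order_refl zero_le_one])
    then have "((\<lambda>s. eta * EE x s - gg u s * II x s) has_integral 0) {0..1}" using I0 by simp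
    then have Eint: "((\<lambda>s. eta * EE x s) has_integral 0) {0..1}"
      by (rule has_integral_eq[rotated]) (simp add: I0)
    have Ec: "continuous_on {0..1} (\<lambda>s. eta * EE x s)"
      using sol_cont(2)[OF sol order_refl] by (intro continuous_intros) auto
    have "eta * EE x 0 = 0"
      using has_integral_0_cbox_imp_0[of 0 1 "\<lambda>s. eta * EE x s" 0] Ec inv Eint eta by auto
    then have "EE x 0 = 0" using eta by simp
    moreover have "II x 0 = 0" using I0 by simp
    ultimately show False using nz by simp
  qed
  define r where "r = SS x 1"
  have r0: "0 \<le> r" using inv[of 1] r_def by simp
  define c where "c = (r*bnom/gnom + 1)/2"
  have rb: "r*bnom/gnom < 1" using r1 r_def kk_def gn bm by (simp add: field_simps)
  have c1: "c < 1" using rb unfolding c_def by simp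
  have "0 \<le> r*bnom/gnom" using r0 bm gn by simp
  then have c2: "1/2 \<le> c" unfolding c_def by simp
  define lam where "lam = (1-c)*min eta gnom"
  have lam0: "lam > 0" unfolding lam_def using c1 eta gn by simp
  define V where "V s = EE x s + c * II x s" for s
  define V1 where "V1 = V 1"
  have V10: "0 \<le> V1" unfolding V1_def V_def using inv[of 1] c2 by simp
  have Vb: "V t \<le> V1*exp(-lam*(t-1))" if t1: "1 \<le> t" for t
  proof -
    define A where "A = {0::nat}"
    define y :: "nat \<Rightarrow> real \<Rightarrow> real" where "y i s = V s - V1*exp(-lam*(s-1))" for i s
    define h :: "nat \<Rightarrow> real \<Rightarrow> real" where
      "h i s = (bb u s * SS x s * II x s - eta * EE x s) + c * (eta * EE x s - gg u s * II x s)
         + lam*V1*exp(-lam*(s-1))" for i s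
    have int: "(h i has_integral (y i \<tau> - y i 1)) {1..\<tau>}" if "i \<in> A" "\<tau> \<in> {1..t}" for i \<tau>
    proof -
      have a: "0 \<le> (1::real)" "1 \<le> \<tau>" using that by auto
      note IE = sol_comp(2)[OF sol a]
      note II = has_integral_mult_right[OF sol_comp(3)[OF sol a], of c]
      note EX = exp_int[OF a(2), of lam V1]
      show ?thesis
        by (rule hi_eq[OF has_integral_add[OF has_integral_add[OF IE II] EX]])
          (simp_all add: h_def y_def V_def V1_def algebra_simps)
    qed
    have ini: "y i 1 \<le> 0" if "i \<in> A" for i by (simp add: y_def V1_def)
    have bnd: "h i s \<le> 0 * (\<Sum>j\<in>A. max (y j s) 0)" if "i \<in> A" "s \<in> {1..t}" "y i s > 0" for i s
    proof -
      have s0: "0 \<le> s" "1 \<le> s" using that by auto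
      note ab = adm_bounds[OF adm s0(1)]
      have "(bb u s * SS x s * II x s - eta * EE x s) + c * (eta * EE x s - gg u s * II x s)
          \<le> -lam * (EE x s + c * II x s)"
        using inv[OF s0(1)] mono[OF zero_le_one s0(2)] r0 c1 eta gn bm ab bpos[OF s0(1)]
        by (intro est_decay[where rr=r and bnom=bnom and gnom=gnom]) (auto simp: r_def c_def lam_def)
      moreover have "V s > V1*exp(-lam*(s-1))" using that(3) by (simp add: y_def)
      then have "-lam * V s < -lam * (V1*exp(-lam*(s-1)))" using lam0 by simp
      ultimately show ?thesis unfolding h_def V_def by (simp add: algebra_simps)
    qed
    have "y 0 t \<le> 0"
      by (rule barrier[where A=A and K=0 and h=h and y=y and a=1 and b=t, OF _ order_refl int ini bnd])
        (use t1 in \<open>auto simp: A_def\<close>)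
    then show ?thesis by (simp add: y_def)
  qed
  define C where "C = 2*V1*exp lam + exp lam"
  have C0: "0 \<le> C" unfolding C_def using V10 by simp
  have "\<forall>t\<ge>0. EE x t + II x t \<le> C * exp (- lam * t)"
  proof (intro allI impI)
    fix t :: real assume t: "0 \<le> t"
    have ex: "exp(-lam*(t-1)) = exp lam * exp (-lam*t)" by (simp add: algebra_simps flip: exp_add)
    show "EE x t + II x t \<le> C * exp (- lam * t)"
    proof (cases "1 \<le> t")
      case True
      have le2: "EE x t + II x t \<le> 2 * V t"
      proof -
      have "(1/2) * II x t \<le> c * II x t" using inv[OF t] c2 by (intro mult_right_mono) auto
      moreover have "0 \<le> EE x t" using inv[OF t] by simp
      moreover have "2 * V t = 2 * EE x t + 2 * (c * II x t)" unfolding V_def by (simp add: algebra_simps)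
      ultimately show "EE x t + II x t \<le> 2 * V t" by linarith
      qed
      have "EE x t + II x t \<le> 2 * V t" by (rule le2)
      also have "\<dots> \<le> 2 * (V1*exp(-lam*(t-1)))" using Vb[OF True] by simp
      also have "\<dots> = (2*V1*exp lam) * exp (-lam*t)" using ex by simp
      also have "\<dots> \<le> C * exp (-lam*t)" unfolding C_def by (intro mult_right_mono) auto
      finally show ?thesis .
    next
      case False
      have "0 \<le> lam*(1-t)" using False lam0 by simp
      then have "1 \<le> exp(lam*(1-t))" by simp
      moreover have "exp(lam*(1-t)) = exp lam * exp (-lam*t)" by (simp add: algebra_simps flip: exp_add)
      ultimately have "1 \<le> exp lam * exp (-lam*t)" by simp
      also have "\<dots> \<le> C * exp (-lam*t)" unfolding C_def using V10 by (intro mult_right_mono) auto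
      moreover have "EE x t + II x t \<le> 1" using inv[OF t] by linarith
      ultimately show ?thesis by linarith
    qed
  qed
  then show ?thesis using C0 lam0 by blast
qed

lemma in_GPi:
  assumes "0 \<le> SS x t" "0 \<le> EE x t" "0 \<le> II x t" "SS x t + EE x t + II x t \<le> 1" "II x t \<le> Imax"
  shows "x t \<in> G_Pi Imax"
proof -
  obtain a b c where xt: "x t = (a, b, c)" by (cases "x t") auto
  show ?thesis using assms unfolding G_Pi_def Pi_set_def SS_def EE_def II_def xt by simp
qed

theorem lemma2:
  fixes eta bmin bnom gnom gmax Imax :: real
  assumes "eta > 0" and "0 < bmin" and "bmin \<le> bnom"
    and "0 < gnom" and "gnom \<le> gmax" and "0 < Imax" and "Imax < 1"
  shows "Xf eta bnom gnom Imax \<subseteq> MRPI eta bmin bnom gnom gmax Imax \<and>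
    (\<forall>x0 \<in> Xf eta bnom gnom Imax. \<forall>u. admissible bmin bnom gnom gmax u \<longrightarrow>
       (\<forall>x. is_sol eta u x0 x \<longrightarrow>
          (\<exists>c\<ge>0. \<exists>lam>0. \<forall>t\<ge>0. fst (snd (x t)) + snd (snd (x t)) \<le> c * exp (- lam * t))))"
proof -
  note prm = assms
  have key: "(\<forall>t\<ge>0. x t \<in> G_Pi Imax) \<and>
     (\<exists>c\<ge>0. \<exists>lam>0. \<forall>t\<ge>0. fst (snd (x t)) + snd (snd (x t)) \<le> c * exp (- lam * t))"
    if x0: "x0 \<in> Xf eta bnom gnom Imax" and adm: "admissible bmin bnom gnom gmax u"
      and sol: "is_sol eta u x0 x" for x0 u x
  proof -
    have x00: "x 0 = x0" using sol unfolding is_sol_def by simp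
    have dfe_case: ?thesis if z: "EE x 0 = 0" "II x 0 = 0" and S0: "0 \<le> SS x 0" "SS x 0 \<le> 1"
    proof -
      have D: "EE x t = 0" "II x t = 0" "SS x t = SS x 0" if t: "0 \<le> t" for t
        using dfe_inv[OF prm(1-5) adm sol z t] by auto
      have G: "\<forall>t\<ge>0. x t \<in> G_Pi Imax"
      proof (intro allI impI)
        fix t :: real assume t: "0 \<le> t"
        show "x t \<in> G_Pi Imax"
          by (rule in_GPi) (simp_all add: D[OF t] S0 prm(6) less_imp_le)
      qed
      have Z: "\<forall>t\<ge>0. fst (snd (x t)) + snd (snd (x t)) \<le> 0 * exp (- 1 * t)"
      proof (intro allI impI)
        fix t :: real assume t: "0 \<le> t"
        have "EE x t + II x t = 0" using D[OF t] by simp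
        then show "fst (snd (x t)) + snd (snd (x t)) \<le> 0 * exp (- 1 * t)"
          unfolding EE_def II_def by simp
      qed
      have "\<exists>c\<ge>0. \<exists>lam>0. \<forall>t\<ge>0. fst (snd (x t)) + snd (snd (x t)) \<le> c * exp (- lam * t)"
        using Z by (intro exI[of _ 0] conjI order_refl exI[of _ "1::real"]) simp_all
      with G show ?thesis by blast
    qed
    obtain S0 E0 I0 where xs: "x0 = (S0, E0, I0)" by (cases x0) auto
    have "(S0, E0, I0) \<in> Pi_set \<and> S0 \<le> gnom / bnom \<and> I0 \<le> Imax \<and> E0 \<le> gnom / eta * Imax
       \<or> (E0 = 0 \<and> I0 = 0 \<and> 0 \<le> S0 \<and> S0 \<le> 1)"
      using x0 unfolding xs Xf_def DFE_def by simp
    then consider (main) "x0 = (S0, E0, I0)" "(S0, E0, I0) \<in> Pi_set"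
        "S0 \<le> gnom / bnom" "I0 \<le> Imax" "E0 \<le> gnom / eta * Imax"
      | (dfe) "x0 = (S0, 0, 0)" "0 \<le> S0" "S0 \<le> 1"
      using xs by blast
    then show ?thesis
    proof cases
      case dfe
      then have "EE x 0 = 0" "II x 0 = 0" "0 \<le> SS x 0" "SS x 0 \<le> 1"
        using x00 by (simp_all add: SS_def EE_def II_def)
      then show ?thesis by (rule dfe_case)
    next
      case main
      have init: "0 \<le> SS x 0" "0 \<le> EE x 0" "0 \<le> II x 0" "SS x 0 \<le> gnom/bnom"
        "EE x 0 \<le> gnom/eta*Imax" "II x 0 \<le> Imax" "SS x 0 + EE x 0 + II x 0 \<le> 1"
        using main(2-5) unfolding x00 main(1) SS_def EE_def II_def Pi_set_def by simp_all
      note M = main_inv[OF prm(1-6) adm sol init]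
      have G: "\<forall>t\<ge>0. x t \<in> G_Pi Imax"
      proof (intro allI impI)
        fix t :: real assume t: "0 \<le> t"
        from M[OF t] have m: "0 \<le> SS x t" "0 \<le> EE x t" "0 \<le> II x t"
          "SS x t + EE x t + II x t \<le> 1" "II x t \<le> Imax" by simp_all
        show "x t \<in> G_Pi Imax" by (rule in_GPi[OF m])
      qed
      show ?thesis
      proof (cases "EE x 0 = 0 \<and> II x 0 = 0")
        case True
        moreover have "SS x 0 \<le> 1" using init by linarith
        ultimately show ?thesis using dfe_case init(1) by blast
      next
        case False
        have "\<exists>c\<ge>0. \<exists>lam>0. \<forall>t\<ge>0. EE x t + II x t \<le> c * exp (- lam * t)"
        proof (rule decay[OF prm(1-5) adm sol _ init(4)])
          fix t :: real assume t: "0 \<le> t"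
          from M[OF t] show "0 \<le> SS x t \<and> 0 \<le> EE x t \<and> 0 \<le> II x t \<and> SS x t + EE x t + II x t \<le> 1"
            by simp
        next
          show "EE x 0 \<noteq> 0 \<or> II x 0 \<noteq> 0" using False by simp
        qed
        then show ?thesis using G unfolding EE_def II_def by simp
      qed
    qed
  qed
  have sub: "Xf eta bnom gnom Imax \<subseteq> MRPI eta bmin bnom gnom gmax Imax"
  proof
    fix x0 assume x0: "x0 \<in> Xf eta bnom gnom Imax"
    obtain S0 E0 I0 where xs: "x0 = (S0, E0, I0)" by (cases x0) auto
    have "(S0, E0, I0) \<in> Pi_set \<and> S0 \<le> gnom / bnom \<and> I0 \<le> Imax \<and> E0 \<le> gnom / eta * Imax
       \<or> (E0 = 0 \<and> I0 = 0 \<and> 0 \<le> S0 \<and> S0 \<le> 1)"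
      using x0 unfolding xs Xf_def DFE_def by simp
    then have "x0 \<in> G_Pi Imax"
      using prm(6) unfolding xs G_Pi_def Pi_set_def by auto
    then show "x0 \<in> MRPI eta bmin bnom gnom gmax Imax"
      unfolding MRPI_def using key[OF x0] by blast
  qed
  show ?thesis using sub key by blast
qed

end
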